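(* Let $\tau$ be a distributive triangle function on $\Delta^+$, $\Sigma$ a ring of subsets of $\Omega\ne\emptyset$, $\gamma$ a $\tau$-decomposable measure on $\Sigma$, and $E\in\Sigma$. Let $f=\sum_{i=1}^n\alpha_i\chi_{E_i}$ with $\alpha_i\in[0,\infty)$ and $E_1,\dots,E_n\in\Sigma$ pairwise disjoint, and $g=\sum_{j=1}^m\beta_j\chi_{F_j}$ with $\beta_j\in[0,\infty)$ and $F_1,\dots,F_m\in\Sigma$ pairwise disjoint. If $f=g$ (as functions on $\Omega$), then $$\bigoplus_{i=1}^n\alpha_i\odot\gamma_{E\cap E_i}=\bigoplus_{j=1}^m\beta_j\odot\gamma_{E\cap F_j},$$ i.e. the $\gamma$-integral $\int_E f\,d\gamma$ of a simple function does not depend on its representation.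
   Context: $\Delta^+$: functions $F:[-\infty,+\infty]\to[0,1]$ non-decreasing, left-continuous on $\mathbb{R}$, $F(x)=0$ for $x\le0$, $F(+\infty)=1$; $\varepsilon_0(x)=1$ if $x>0$, else $0$. Triangle function: symmetric, associative $\tau:\Delta^+\times\Delta^+\to\Delta^+$, non-decreasing in each variable, identity $\varepsilon_0$; $G\oplus H=\tau(G,H)$, $\bigoplus_{k=1}^nG_k=\tau(G_1,\bigoplus_{k=2}^nG_k)$. For $c\ge0$, $c\odot G=\varepsilon_0$ if $c=0$, $(c\odot G)(x)=G(x/c)$ if $c>0$; $\tau$ is distributive if $c\odot(G\oplus H)=(c\odot G)\oplus(c\odot H)$ for all $c\ge0$, $G,H$. A $\tau$-decomposable measure on $\Sigma$ is $\gamma:\Sigma\to\Delta^+$ with $\gamma_\emptyset=\varepsilon_0$ and $\gamma_{A\cup B}=\tau(\gamma_A,\gamma_B)$ for disjoint $A,B\in\Sigma$. For a simple function $f=\sum_{i=1}^n x_i\chi_{E_i}$ ($x_i\ge0$, $E_i\in\Sigma$ pairwise disjoint) one defines $\int_Ef\,d\gamma=\bigoplus_{i=1}^nx_i\odot\gamma_{E\cap E_i}$. *)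

theory Defs
  imports "HOL-Analysis.Analysis"
begin

definition Delta_plus :: "(ereal \<Rightarrow> real) set" where
  "Delta_plus = {F. (\<forall>x. 0 \<le> F x \<and> F x \<le> 1) \<and> mono F
      \<and> (\<forall>x::real. ((\<lambda>y::real. F (ereal y)) \<longlongrightarrow> F (ereal x)) (at_left x))
      \<and> (\<forall>x. x \<le> 0 \<longrightarrow> F x = 0) \<and> F \<infinity> = 1}"

definition eps0 :: "ereal \<Rightarrow> real" where
  "eps0 x = (if x > 0 then 1 else 0)"

definition le_df :: "(ereal \<Rightarrow> real) \<Rightarrow> (ereal \<Rightarrow> real) \<Rightarrow> bool" where
  "le_df F G \<longleftrightarrow> (\<forall>x. F x \<le> G x)"

definition triangle_function ::
  "((ereal \<Rightarrow> real) \<Rightarrow> (ereal \<Rightarrow> real) \<Rightarrow> (ereal \<Rightarrow> real)) \<Rightarrow> bool" where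
  "triangle_function \<tau> \<longleftrightarrow>
     (\<forall>G\<in>Delta_plus. \<forall>H\<in>Delta_plus. \<tau> G H \<in> Delta_plus)
   \<and> (\<forall>G\<in>Delta_plus. \<forall>H\<in>Delta_plus. \<tau> G H = \<tau> H G)
   \<and> (\<forall>G\<in>Delta_plus. \<forall>H\<in>Delta_plus. \<forall>K\<in>Delta_plus. \<tau> G (\<tau> H K) = \<tau> (\<tau> G H) K)
   \<and> (\<forall>G\<in>Delta_plus. \<forall>G'\<in>Delta_plus. \<forall>H\<in>Delta_plus. le_df G G' \<longrightarrow> le_df (\<tau> G H) (\<tau> G' H))
   \<and> (\<forall>G\<in>Delta_plus. \<tau> G eps0 = G)"

definition smul_df :: "real \<Rightarrow> (ereal \<Rightarrow> real) \<Rightarrow> (ereal \<Rightarrow> real)" where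
  "smul_df c G = (if c = 0 then eps0 else (\<lambda>x. G (x / ereal c)))"

definition distributive_tf ::
  "((ereal \<Rightarrow> real) \<Rightarrow> (ereal \<Rightarrow> real) \<Rightarrow> (ereal \<Rightarrow> real)) \<Rightarrow> bool" where
  "distributive_tf \<tau> \<longleftrightarrow> triangle_function \<tau> \<and>
     (\<forall>c\<ge>0. \<forall>G\<in>Delta_plus. \<forall>H\<in>Delta_plus.
        smul_df c (\<tau> G H) = \<tau> (smul_df c G) (smul_df c H))"

definition tau_decomposable ::
  "((ereal \<Rightarrow> real) \<Rightarrow> (ereal \<Rightarrow> real) \<Rightarrow> (ereal \<Rightarrow> real)) \<Rightarrow> 'a set set
     \<Rightarrow> ('a set \<Rightarrow> (ereal \<Rightarrow> real)) \<Rightarrow> bool" where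
  "tau_decomposable \<tau> \<Sigma> \<gamma> \<longleftrightarrow>
     (\<forall>A\<in>\<Sigma>. \<gamma> A \<in> Delta_plus) \<and> \<gamma> {} = eps0 \<and>
     (\<forall>A\<in>\<Sigma>. \<forall>B\<in>\<Sigma>. A \<inter> B = {} \<longrightarrow> \<gamma> (A \<union> B) = \<tau> (\<gamma> A) (\<gamma> B))"

text \<open>Iterated sum: oplus [G1,...,Gn] = \<tau>(G1, oplus [G2,...,Gn]); empty list gives eps0,
  so a singleton list gives \<tau> G1 eps0 = G1.\<close>
fun oplus_list ::
  "((ereal \<Rightarrow> real) \<Rightarrow> (ereal \<Rightarrow> real) \<Rightarrow> (ereal \<Rightarrow> real)) \<Rightarrow> (ereal \<Rightarrow> real) list \<Rightarrow> (ereal \<Rightarrow> real)" where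
  "oplus_list \<tau> [] = eps0"
| "oplus_list \<tau> (G # Gs) = (if Gs = [] then G else \<tau> G (oplus_list \<tau> Gs))"

end

theory Submission
  imports Defs
begin

lemma eps0_in: "eps0 \<in> Delta_plus"
proof -
  have lc: "((\<lambda>y::real. eps0 (ereal y)) \<longlongrightarrow> eps0 (ereal x)) (at_left x)" for x :: real
  proof (cases "x > 0")
    case True
    have "eventually (\<lambda>y::real. y > 0) (at_left x)"
      using eventually_at_left_real[OF True] by (rule eventually_mono) simp
    then have "eventually (\<lambda>y::real. eps0 (ereal y) = eps0 (ereal x)) (at_left x)"
      by eventually_elim (use True in \<open>simp add: eps0_def\<close>)
    then show ?thesis by (rule tendsto_eventually)
  next
    case False
    have "eventually (\<lambda>y::real. y < x) (at_left x)"
      by (simp add: eventually_at_filter)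
    then have "eventually (\<lambda>y::real. eps0 (ereal y) = eps0 (ereal x)) (at_left x)"
      by eventually_elim (use False in \<open>simp add: eps0_def\<close>)
    then show ?thesis by (rule tendsto_eventually)
  qed
  have "mono eps0" unfolding mono_def eps0_def by auto
  then show ?thesis unfolding Delta_plus_def mem_Collect_eq
    apply (intro conjI allI impI)
         apply (simp add: eps0_def)
        apply (simp add: eps0_def)
       apply assumption
      apply (rule lc)
     apply (simp add: eps0_def)
    apply (simp add: eps0_def)
    done
qed

lemma ediv_simp: "c > 0 \<Longrightarrow> ereal r / ereal c = ereal (r / c)"
  by simp
lemma ediv_inf: "c > 0 \<Longrightarrow> \<infinity> / ereal c = \<infinity>"
  by (simp add: divide_ereal_def)
lemma ediv_minf: "c > 0 \<Longrightarrow> -\<infinity> / ereal c = -\<infinity>"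
  by (simp add: divide_ereal_def)
lemma ediv_pos: "c > 0 \<Longrightarrow> (x / ereal c > 0) = (x > 0)"
  by (cases x) (simp_all only: ediv_simp ediv_inf ediv_minf ereal_less(2) zero_less_divide_iff, auto)


lemma smul_eps0: assumes "c \<ge> 0" shows "smul_df c eps0 = eps0"
proof (cases "c = 0")
  case True then show ?thesis by (simp add: smul_df_def)
next
  case False
  with assms have cp: "c > 0" by simp
  show ?thesis
  proof
    fix x
    show "smul_df c eps0 x = eps0 x"
      using False by (simp only: smul_df_def if_False eps0_def ediv_pos[OF cp])
  qed
qed

lemma DP_b: "G \<in> Delta_plus \<Longrightarrow> 0 \<le> G x \<and> G x \<le> 1"
  unfolding Delta_plus_def by blast
lemma DP_m: "G \<in> Delta_plus \<Longrightarrow> mono G"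
  unfolding Delta_plus_def by blast
lemma DP_lc: "G \<in> Delta_plus \<Longrightarrow> ((\<lambda>y::real. G (ereal y)) \<longlongrightarrow> G (ereal x)) (at_left x)"
  unfolding Delta_plus_def by blast
lemma DP_z: "G \<in> Delta_plus \<Longrightarrow> x \<le> 0 \<Longrightarrow> G x = 0"
  unfolding Delta_plus_def by blast
lemma DP_inf: "G \<in> Delta_plus \<Longrightarrow> G \<infinity> = 1"
  unfolding Delta_plus_def by blast

lemma smul_in:
  assumes c: "c \<ge> 0" and G: "G \<in> Delta_plus"
  shows "smul_df c G \<in> Delta_plus"
proof (cases "c = 0")
  case True then show ?thesis by (simp add: smul_df_def eps0_in)
next
  case False
  with c have cp: "c > 0" by simp
  have sm: "smul_df c G = (\<lambda>x. G (x / ereal c))" using False by (simp add: smul_df_def)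
  have b: "0 \<le> G x \<and> G x \<le> 1" for x using G by (rule DP_b)
  have mG: "mono G" using G by (rule DP_m)
  have cp': "0 < ereal c" using cp by simp
  have dm: "x \<le> y \<Longrightarrow> x / ereal c \<le> y / ereal c" for x y
    by (rule ereal_divide_right_mono[OF _ cp'])
  have m: "mono (\<lambda>x. G (x / ereal c))"
    by (rule monoI, rule monoD[OF mG], erule dm)
  have z: "x \<le> 0 \<Longrightarrow> G (x / ereal c) = 0" for x
  proof -
    assume "x \<le> 0"
    then have "x / ereal c \<le> 0 / ereal c" by (rule dm)
    then have "x / ereal c \<le> 0" by simp
    then show ?thesis using G by (rule DP_z[rotated])
  qed
  have inf: "G (\<infinity> / ereal c) = 1" by (simp only: ediv_inf[OF cp] DP_inf[OF G])
  have lc: "((\<lambda>y::real. G (ereal y / ereal c)) \<longlongrightarrow> G (ereal x / ereal c)) (at_left x)" for x :: real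
  proof -
    have lcG: "((\<lambda>y::real. G (ereal y)) \<longlongrightarrow> G (ereal (x / c))) (at_left (x / c))"
      using G by (rule DP_lc)
    have fl: "filterlim (\<lambda>y::real. y / c) (at_left (x / c)) (at_left x)"
      unfolding filterlim_at
    proof
      have "eventually (\<lambda>y::real. y < x) (at_left x)"
        by (simp add: eventually_at_filter)
      then show "eventually (\<lambda>y::real. y / c \<in> {..<x / c} \<and> y / c \<noteq> x / c) (at_left x)"
      proof (rule eventually_mono)
        fix y :: real assume "y < x"
        then have "y / c < x / c" using cp by (simp add: divide_strict_right_mono)
        then show "y / c \<in> {..<x / c} \<and> y / c \<noteq> x / c" by force
      qed
      show "((\<lambda>y::real. y / c) \<longlongrightarrow> x / c) (at_left x)"
        using cp by (intro tendsto_divide tendsto_ident_at tendsto_const) simp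
    qed
    have "((\<lambda>y::real. G (ereal (y / c))) \<longlongrightarrow> G (ereal (x / c))) (at_left x)"
      using filterlim_compose[OF lcG fl] by (simp only: o_def)
    then show ?thesis by (simp only: ediv_simp[OF cp])
  qed
  show ?thesis unfolding sm Delta_plus_def mem_Collect_eq
    by (intro conjI allI impI) (rule b[THEN conjunct1] b[THEN conjunct2] m lc z inf | assumption)+
qed

typedef df = "Delta_plus :: (ereal \<Rightarrow> real) set"
  morphisms Rep_df Abs_df
  using eps0_in by blast

definition tplus :: "((ereal \<Rightarrow> real) \<Rightarrow> (ereal \<Rightarrow> real) \<Rightarrow> (ereal \<Rightarrow> real)) \<Rightarrow> df \<Rightarrow> df \<Rightarrow> df"
  where "tplus \<tau> a b = Abs_df (\<tau> (Rep_df a) (Rep_df b))"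

definition smulD :: "real \<Rightarrow> df \<Rightarrow> df"
  where "smulD c a = Abs_df (smul_df (max c 0) (Rep_df a))"

locale tfl = fixes \<tau> assumes tf: "triangle_function \<tau>"
begin

lemma cl: "G \<in> Delta_plus \<Longrightarrow> H \<in> Delta_plus \<Longrightarrow> \<tau> G H \<in> Delta_plus"
  using tf unfolding triangle_function_def by blast

lemma comm: "G \<in> Delta_plus \<Longrightarrow> H \<in> Delta_plus \<Longrightarrow> \<tau> G H = \<tau> H G"
  using tf unfolding triangle_function_def by blast

lemma assoc: "G \<in> Delta_plus \<Longrightarrow> H \<in> Delta_plus \<Longrightarrow> K \<in> Delta_plus \<Longrightarrow> \<tau> G (\<tau> H K) = \<tau> (\<tau> G H) K"
  using tf unfolding triangle_function_def by blast

lemma unit: "G \<in> Delta_plus \<Longrightarrow> \<tau> G eps0 = G"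
  using tf unfolding triangle_function_def by blast

lemma Rep_tplus: "Rep_df (tplus \<tau> a b) = \<tau> (Rep_df a) (Rep_df b)"
  unfolding tplus_def by (rule Abs_df_inverse) (rule cl[OF Rep_df Rep_df])

sublocale S: comm_monoid_set "tplus \<tau>" "Abs_df eps0"
proof unfold_locales
  fix a b c
  have "tplus \<tau> (tplus \<tau> a b) c = Abs_df (\<tau> (\<tau> (Rep_df a) (Rep_df b)) (Rep_df c))"
    by (simp only: tplus_def[of \<tau> "tplus \<tau> a b" c] Rep_tplus)
  also have "\<dots> = Abs_df (\<tau> (Rep_df a) (\<tau> (Rep_df b) (Rep_df c)))"
    by (simp only: assoc[OF Rep_df Rep_df Rep_df])
  also have "\<dots> = tplus \<tau> a (tplus \<tau> b c)"
    by (simp only: tplus_def[of \<tau> a "tplus \<tau> b c"] Rep_tplus)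
  finally show "tplus \<tau> (tplus \<tau> a b) c = tplus \<tau> a (tplus \<tau> b c)" .
  show "tplus \<tau> a b = tplus \<tau> b a"
    unfolding tplus_def by (simp only: comm[OF Rep_df Rep_df])
  show "tplus \<tau> a (Abs_df eps0) = a"
    unfolding tplus_def by (simp only: Abs_df_inverse[OF eps0_in] unit[OF Rep_df] Rep_df_inverse)
qed

lemma oplus_list_F:
  assumes "distinct xs" "\<forall>x\<in>set xs. f x \<in> Delta_plus"
  shows "oplus_list \<tau> (map f xs) = Rep_df (S.F (\<lambda>x. Abs_df (f x)) (set xs))"
  using assms
proof (induction xs)
  case Nil
  then show ?case by (simp add: Abs_df_inverse eps0_in)
next
  case (Cons x xs)
  show ?case
  proof (cases "xs = []")
    case True
    then show ?thesis using Cons.prems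
      by (simp add: Rep_tplus Abs_df_inverse eps0_in unit)
  next
    case False
    then show ?thesis using Cons
      by (simp add: Rep_tplus Abs_df_inverse)
  qed
qed

lemma smulD_F:
  assumes "distributive_tf \<tau>" "finite J"
  shows "smulD c (S.F g J) = S.F (\<lambda>j. smulD c (g j)) J"
  using assms(2)
proof (induction J rule: finite_induct)
  case empty
  then show ?case by (simp add: smulD_def Abs_df_inverse eps0_in smul_eps0)
next
  case (insert x F)
  have "smulD c (S.F g (insert x F)) = smulD c (tplus \<tau> (g x) (S.F g F))"
    by (simp only: S.insert[OF insert.hyps])
  also have "\<dots> = tplus \<tau> (smulD c (g x)) (smulD c (S.F g F))"
  proof -
    have d: "smul_df (max c 0) (\<tau> G H) = \<tau> (smul_df (max c 0) G) (smul_df (max c 0) H)"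
      if "G \<in> Delta_plus" "H \<in> Delta_plus" for G H
      using assms(1) that unfolding distributive_tf_def by simp
    show ?thesis unfolding smulD_def tplus_def
      by (simp only: Abs_df_inverse[OF cl[OF Rep_df Rep_df]] Abs_df_inverse[OF smul_in[OF _ Rep_df]]
          d[OF Rep_df Rep_df] max.cobounded2)
  qed
  also have "\<dots> = tplus \<tau> (smulD c (g x)) (S.F (\<lambda>j. smulD c (g j)) F)"
    by (simp only: insert.IH)
  also have "\<dots> = S.F (\<lambda>j. smulD c (g j)) (insert x F)"
    by (simp only: S.insert[OF insert.hyps])
  finally show ?case .
qed

lemma gamma_F:
  assumes "tau_decomposable \<tau> \<Sigma> \<gamma>" "ring_of_sets \<Omega> \<Sigma>" "finite J"
    "\<forall>j\<in>J. A j \<in> \<Sigma>" "disjoint_family_on A J"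
  shows "(\<Union>j\<in>J. A j) \<in> \<Sigma> \<and> Abs_df (\<gamma> (\<Union>j\<in>J. A j)) = S.F (\<lambda>j. Abs_df (\<gamma> (A j))) J"
proof -
  interpret R: ring_of_sets \<Omega> \<Sigma> by fact
  have TD1: "\<And>A. A \<in> \<Sigma> \<Longrightarrow> \<gamma> A \<in> Delta_plus"
    using assms(1) unfolding tau_decomposable_def by blast
  have TD2: "\<gamma> {} = eps0"
    using assms(1) unfolding tau_decomposable_def by blast
  have TD3: "\<And>A B. A \<in> \<Sigma> \<Longrightarrow> B \<in> \<Sigma> \<Longrightarrow> A \<inter> B = {} \<Longrightarrow> \<gamma> (A \<union> B) = \<tau> (\<gamma> A) (\<gamma> B)"
    using assms(1) unfolding tau_decomposable_def by blast
  show ?thesis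
  using assms(3-5)
proof (induction J rule: finite_induct)
  case empty
  have "Abs_df (\<gamma> (\<Union>j\<in>{}. A j)) = S.F (\<lambda>j. Abs_df (\<gamma> (A j))) {}"
    by (simp only: S.empty UN_empty TD2)
  then show ?case using R.empty_sets by simp
next
  case (insert x F)
  have df: "disjoint_family_on A F" using insert.prems(2) disjoint_family_on_mono[of F "insert x F"] by blast
  have IH: "(\<Union>j\<in>F. A j) \<in> \<Sigma>" "Abs_df (\<gamma> (\<Union>j\<in>F. A j)) = S.F (\<lambda>j. Abs_df (\<gamma> (A j))) F"
    using insert.IH insert.prems(1) df by blast+
  have Ax: "A x \<in> \<Sigma>" using insert.prems by blast
  have dis: "A x \<inter> (\<Union>j\<in>F. A j) = {}"
  proof -
    have "A x \<inter> A j = {}" if "j \<in> F" for j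
    proof -
      have "x \<noteq> j" using insert.hyps(2) that by metis
      then show ?thesis using insert.prems(2) that
        by (intro disjoint_family_onD[of A "insert x F"]) simp_all
    qed
    then show ?thesis unfolding Int_UN_distrib by simp
  qed
  have un: "(\<Union>j\<in>insert x F. A j) = A x \<union> (\<Union>j\<in>F. A j)" by (rule UN_insert)
  have mem: "(\<Union>j\<in>insert x F. A j) \<in> \<Sigma>" unfolding un using Ax IH(1) by (rule R.Un)
  have g1: "\<gamma> (A x) \<in> Delta_plus" "\<gamma> (\<Union>j\<in>F. A j) \<in> Delta_plus"
    using TD1 Ax IH(1) by blast+
  have "Abs_df (\<gamma> (\<Union>j\<in>insert x F. A j)) = Abs_df (\<tau> (\<gamma> (A x)) (\<gamma> (\<Union>j\<in>F. A j)))"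
    unfolding un by (simp only: TD3[OF Ax IH(1) dis])
  also have "\<dots> = tplus \<tau> (Abs_df (\<gamma> (A x))) (Abs_df (\<gamma> (\<Union>j\<in>F. A j)))"
    unfolding tplus_def by (simp only: Abs_df_inverse[OF g1(1)] Abs_df_inverse[OF g1(2)])
  also have "\<dots> = tplus \<tau> (Abs_df (\<gamma> (A x))) (S.F (\<lambda>j. Abs_df (\<gamma> (A j))) F)"
    by (simp only: IH(2))
  also have "\<dots> = S.F (\<lambda>j. Abs_df (\<gamma> (A j))) (insert x F)"
    by (simp only: S.insert[OF insert.hyps])
  finally show ?case using mem by blast
qed
qed

end

lemma smulD_0: "c \<le> 0 \<Longrightarrow> smulD c a = Abs_df eps0"
  by (simp add: smulD_def smul_df_def)

lemma smulD_eps0: "smulD c (Abs_df eps0) = Abs_df eps0"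
  by (simp add: smulD_def Abs_df_inverse eps0_in smul_eps0)

theorem lemma4p2:
  fixes \<tau> :: "(ereal \<Rightarrow> real) \<Rightarrow> (ereal \<Rightarrow> real) \<Rightarrow> (ereal \<Rightarrow> real)"
    and \<Omega> :: "'a set" and \<Sigma> :: "'a set set" and \<gamma> :: "'a set \<Rightarrow> (ereal \<Rightarrow> real)"
    and E :: "'a set"
    and n m :: nat and \<alpha> \<beta> :: "nat \<Rightarrow> real" and Es Fs :: "nat \<Rightarrow> 'a set"
  assumes "distributive_tf \<tau>"
    and "ring_of_sets \<Omega> \<Sigma>" and "\<Omega> \<noteq> {}"
    and "tau_decomposable \<tau> \<Sigma> \<gamma>"
    and "E \<in> \<Sigma>"
    and "n \<ge> 1" and "m \<ge> 1"
    and "\<forall>i\<in>{1..n}. 0 \<le> \<alpha> i \<and> Es i \<in> \<Sigma>"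
    and "\<forall>i\<in>{1..n}. \<forall>k\<in>{1..n}. i \<noteq> k \<longrightarrow> Es i \<inter> Es k = {}"
    and "\<forall>j\<in>{1..m}. 0 \<le> \<beta> j \<and> Fs j \<in> \<Sigma>"
    and "\<forall>j\<in>{1..m}. \<forall>k\<in>{1..m}. j \<noteq> k \<longrightarrow> Fs j \<inter> Fs k = {}"
    and "\<forall>x\<in>\<Omega>. (\<Sum>i=1..n. \<alpha> i * indicator (Es i) x) = (\<Sum>j=1..m. \<beta> j * indicator (Fs j) x)"
  shows "oplus_list \<tau> (map (\<lambda>i. smul_df (\<alpha> i) (\<gamma> (E \<inter> Es i))) [1..<n+1])
       = oplus_list \<tau> (map (\<lambda>j. smul_df (\<beta> j) (\<gamma> (E \<inter> Fs j))) [1..<m+1])"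
proof -
  interpret T: tfl \<tau> using assms(1) by (simp add: distributive_tf_def tfl_def)
  interpret R: ring_of_sets \<Omega> \<Sigma> by fact
  have TD1: "\<And>A. A \<in> \<Sigma> \<Longrightarrow> \<gamma> A \<in> Delta_plus"
    using assms(4) unfolding tau_decomposable_def by blast
  have TD2: "\<gamma> {} = eps0"
    using assms(4) unfolding tau_decomposable_def by blast
  have EsS: "\<And>i. i \<in> {1..n} \<Longrightarrow> Es i \<in> \<Sigma>" and al: "\<And>i. i \<in> {1..n} \<Longrightarrow> 0 \<le> \<alpha> i"
    using assms(8) by blast+
  have FsS: "\<And>j. j \<in> {1..m} \<Longrightarrow> Fs j \<in> \<Sigma>" and be: "\<And>j. j \<in> {1..m} \<Longrightarrow> 0 \<le> \<beta> j"
    using assms(10) by blast+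
  have sub: "\<And>X. X \<in> \<Sigma> \<Longrightarrow> X \<subseteq> \<Omega>" by (rule R.sets_into_space)
  define f where "f x = (\<Sum>i=1..n. \<alpha> i * indicator (Es i) x)" for x
  define g where "g x = (\<Sum>j=1..m. \<beta> j * indicator (Fs j) x)" for x
  have fg: "\<And>x. x \<in> \<Omega> \<Longrightarrow> f x = g x" using assms(12) unfolding f_def g_def by blast
  have fval: "f x = \<alpha> i" if i: "i \<in> {1..n}" and x: "x \<in> Es i" for i x
  proof -
    have "f x = (\<Sum>k\<in>{i}. \<alpha> k * indicator (Es k) x)"
      unfolding f_def
    proof (rule sum.mono_neutral_right)
      show "finite {1..n}" by simp
      show "{i} \<subseteq> {1..n}" using i by simp
      show "\<forall>k\<in>{1..n} - {i}. \<alpha> k * indicator (Es k) x = 0"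
      proof
        fix k assume k: "k \<in> {1..n} - {i}"
        then have "Es k \<inter> Es i = {}" using assms(9) i by blast
        then have "x \<notin> Es k" using x by blast
        then show "\<alpha> k * indicator (Es k) x = 0" by simp
      qed
    qed
    also have "\<dots> = \<alpha> i" using x by simp
    finally show ?thesis .
  qed
  have gval: "g x = \<beta> j" if j: "j \<in> {1..m}" and x: "x \<in> Fs j" for j x
  proof -
    have "g x = (\<Sum>k\<in>{j}. \<beta> k * indicator (Fs k) x)"
      unfolding g_def
    proof (rule sum.mono_neutral_right)
      show "finite {1..m}" by simp
      show "{j} \<subseteq> {1..m}" using j by simp
      show "\<forall>k\<in>{1..m} - {j}. \<beta> k * indicator (Fs k) x = 0"
      proof
        fix k assume k: "k \<in> {1..m} - {j}"
        then have "Fs k \<inter> Fs j = {}" using assms(11) j by blast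
        then have "x \<notin> Fs k" using x by blast
        then show "\<beta> k * indicator (Fs k) x = 0" by simp
      qed
    qed
    also have "\<dots> = \<beta> j" using x by simp
    finally show ?thesis .
  qed
  have fzero: "f x = 0" if "\<forall>i\<in>{1..n}. x \<notin> Es i" for x
    unfolding f_def by (rule sum.neutral) (use that in simp)
  have gzero: "g x = 0" if "\<forall>j\<in>{1..m}. x \<notin> Fs j" for x
    unfolding g_def by (rule sum.neutral) (use that in simp)
  define h where "h i j = Abs_df (\<gamma> (E \<inter> Es i \<inter> Fs j))" for i j
  have hS: "E \<inter> Es i \<inter> Fs j \<in> \<Sigma>" if "i \<in> {1..n}" "j \<in> {1..m}" for i j
    using assms(5) EsS[OF that(1)] FsS[OF that(2)] by (intro R.Int)
  have key: "smulD (\<alpha> i) (h i j) = smulD (\<beta> j) (h i j)" if i: "i \<in> {1..n}" and j: "j \<in> {1..m}" for i j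
  proof (cases "E \<inter> Es i \<inter> Fs j = {}")
    case True
    then have "h i j = Abs_df eps0" by (simp add: h_def TD2)
    then show ?thesis by (simp add: smulD_eps0)
  next
    case False
    then obtain x where x: "x \<in> E" "x \<in> Es i" "x \<in> Fs j" by blast
    have "x \<in> \<Omega>" using sub[OF EsS[OF i]] x by blast
    then have "\<alpha> i = \<beta> j" using fg fval[OF i x(2)] gval[OF j x(3)] by simp
    then show ?thesis by simp
  qed
  have row: "smulD (\<alpha> i) (Abs_df (\<gamma> (E \<inter> Es i))) = T.S.F (\<lambda>j. smulD (\<alpha> i) (h i j)) {1..m}"
    if i: "i \<in> {1..n}" for i
  proof (cases "\<alpha> i = 0")
    case True
    then show ?thesis by (simp add: smulD_0)
  next
    case False
    then have ap: "\<alpha> i > 0" using al[OF i] by simp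
    have un: "E \<inter> Es i = (\<Union>j\<in>{1..m}. E \<inter> Es i \<inter> Fs j)"
    proof
      show "E \<inter> Es i \<subseteq> (\<Union>j\<in>{1..m}. E \<inter> Es i \<inter> Fs j)"
      proof
        fix x assume x: "x \<in> E \<inter> Es i"
        show "x \<in> (\<Union>j\<in>{1..m}. E \<inter> Es i \<inter> Fs j)"
        proof (rule ccontr)
          assume "x \<notin> (\<Union>j\<in>{1..m}. E \<inter> Es i \<inter> Fs j)"
          then have "\<forall>j\<in>{1..m}. x \<notin> Fs j" using x by blast
          then have "g x = 0" by (rule gzero)
          moreover have "x \<in> \<Omega>" using sub[OF EsS[OF i]] x by blast
          ultimately have "f x = 0" using fg by simp
          moreover have "f x = \<alpha> i" using fval[OF i] x by blast
          ultimately show False using ap by simp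
        qed
      qed
    qed blast
    have dj: "disjoint_family_on (\<lambda>j. E \<inter> Es i \<inter> Fs j) {1..m}"
      unfolding disjoint_family_on_def using assms(11) by blast
    have gF: "(\<Union>j\<in>{1..m}. E \<inter> Es i \<inter> Fs j) \<in> \<Sigma> \<and> Abs_df (\<gamma> (\<Union>j\<in>{1..m}. E \<inter> Es i \<inter> Fs j)) = T.S.F (\<lambda>j. Abs_df (\<gamma> (E \<inter> Es i \<inter> Fs j))) {1..m}"
      by (rule T.gamma_F[OF assms(4) assms(2)]) (use hS[OF i] dj in auto)
    have e1: "Abs_df (\<gamma> (E \<inter> Es i)) = Abs_df (\<gamma> (\<Union>j\<in>{1..m}. E \<inter> Es i \<inter> Fs j))"
      by (simp only: un[symmetric])
    have "Abs_df (\<gamma> (E \<inter> Es i)) = T.S.F (\<lambda>j. h i j) {1..m}"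
      unfolding h_def using e1 conjunct2[OF gF] by (rule trans)
    then show ?thesis by (simp only: T.smulD_F[OF assms(1) finite_atLeastAtMost])
  qed
  have col: "smulD (\<beta> j) (Abs_df (\<gamma> (E \<inter> Fs j))) = T.S.F (\<lambda>i. smulD (\<beta> j) (h i j)) {1..n}"
    if j: "j \<in> {1..m}" for j
  proof (cases "\<beta> j = 0")
    case True
    then show ?thesis by (simp add: smulD_0)
  next
    case False
    then have bp: "\<beta> j > 0" using be[OF j] by simp
    have un: "E \<inter> Fs j = (\<Union>i\<in>{1..n}. E \<inter> Es i \<inter> Fs j)"
    proof
      show "E \<inter> Fs j \<subseteq> (\<Union>i\<in>{1..n}. E \<inter> Es i \<inter> Fs j)"
      proof
        fix x assume x: "x \<in> E \<inter> Fs j"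
        show "x \<in> (\<Union>i\<in>{1..n}. E \<inter> Es i \<inter> Fs j)"
        proof (rule ccontr)
          assume "x \<notin> (\<Union>i\<in>{1..n}. E \<inter> Es i \<inter> Fs j)"
          then have "\<forall>i\<in>{1..n}. x \<notin> Es i" using x by blast
          then have "f x = 0" by (rule fzero)
          moreover have "x \<in> \<Omega>" using sub[OF FsS[OF j]] x by blast
          ultimately have "g x = 0" using fg by simp
          moreover have "g x = \<beta> j" using gval[OF j] x by blast
          ultimately show False using bp by simp
        qed
      qed
    qed blast
    have dj: "disjoint_family_on (\<lambda>i. E \<inter> Es i \<inter> Fs j) {1..n}"
      unfolding disjoint_family_on_def using assms(9) by blast
    have gF: "(\<Union>i\<in>{1..n}. E \<inter> Es i \<inter> Fs j) \<in> \<Sigma> \<and> Abs_df (\<gamma> (\<Union>i\<in>{1..n}. E \<inter> Es i \<inter> Fs j)) = T.S.F (\<lambda>i. Abs_df (\<gamma> (E \<inter> Es i \<inter> Fs j))) {1..n}"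
      by (rule T.gamma_F[OF assms(4) assms(2)]) (use hS[OF _ j] dj in auto)
    have e1: "Abs_df (\<gamma> (E \<inter> Fs j)) = Abs_df (\<gamma> (\<Union>i\<in>{1..n}. E \<inter> Es i \<inter> Fs j))"
      by (simp only: un[symmetric])
    have "Abs_df (\<gamma> (E \<inter> Fs j)) = T.S.F (\<lambda>i. h i j) {1..n}"
      unfolding h_def using e1 conjunct2[OF gF] by (rule trans)
    then show ?thesis by (simp only: T.smulD_F[OF assms(1) finite_atLeastAtMost])
  qed
  have L: "oplus_list \<tau> (map (\<lambda>i. smul_df (\<alpha> i) (\<gamma> (E \<inter> Es i))) [1..<n+1])
      = Rep_df (T.S.F (\<lambda>i. smulD (\<alpha> i) (Abs_df (\<gamma> (E \<inter> Es i)))) {1..n})"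
  proof -
    have m: "\<And>i. i \<in> {1..n} \<Longrightarrow> \<gamma> (E \<inter> Es i) \<in> Delta_plus"
      using TD1 R.Int assms(5) EsS by blast
    have "oplus_list \<tau> (map (\<lambda>i. smul_df (\<alpha> i) (\<gamma> (E \<inter> Es i))) [1..<n+1])
      = Rep_df (T.S.F (\<lambda>i. Abs_df (smul_df (\<alpha> i) (\<gamma> (E \<inter> Es i)))) (set [1..<n+1]))"
      by (rule T.oplus_list_F) (use m al smul_in in auto)
    also have "set [1..<n+1] = {1..n}" by auto
    also have "T.S.F (\<lambda>i. Abs_df (smul_df (\<alpha> i) (\<gamma> (E \<inter> Es i)))) {1..n}
        = T.S.F (\<lambda>i. smulD (\<alpha> i) (Abs_df (\<gamma> (E \<inter> Es i)))) {1..n}"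
    proof (rule T.S.cong[OF refl])
      fix i assume i: "i \<in> {1..n}"
      show "Abs_df (smul_df (\<alpha> i) (\<gamma> (E \<inter> Es i))) = smulD (\<alpha> i) (Abs_df (\<gamma> (E \<inter> Es i)))"
        unfolding smulD_def using al[OF i] by (simp add: Abs_df_inverse[OF m[OF i]] max.absorb1)
    qed
    finally show ?thesis .
  qed
  have Rr: "oplus_list \<tau> (map (\<lambda>j. smul_df (\<beta> j) (\<gamma> (E \<inter> Fs j))) [1..<m+1])
      = Rep_df (T.S.F (\<lambda>j. smulD (\<beta> j) (Abs_df (\<gamma> (E \<inter> Fs j)))) {1..m})"
  proof -
    have m: "\<And>j. j \<in> {1..m} \<Longrightarrow> \<gamma> (E \<inter> Fs j) \<in> Delta_plus"
      using TD1 R.Int assms(5) FsS by blast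
    have "oplus_list \<tau> (map (\<lambda>j. smul_df (\<beta> j) (\<gamma> (E \<inter> Fs j))) [1..<m+1])
      = Rep_df (T.S.F (\<lambda>j. Abs_df (smul_df (\<beta> j) (\<gamma> (E \<inter> Fs j)))) (set [1..<m+1]))"
      by (rule T.oplus_list_F) (use m be smul_in in auto)
    also have "set [1..<m+1] = {1..m}" by auto
    also have "T.S.F (\<lambda>j. Abs_df (smul_df (\<beta> j) (\<gamma> (E \<inter> Fs j)))) {1..m}
        = T.S.F (\<lambda>j. smulD (\<beta> j) (Abs_df (\<gamma> (E \<inter> Fs j)))) {1..m}"
    proof (rule T.S.cong[OF refl])
      fix j assume j: "j \<in> {1..m}"
      show "Abs_df (smul_df (\<beta> j) (\<gamma> (E \<inter> Fs j))) = smulD (\<beta> j) (Abs_df (\<gamma> (E \<inter> Fs j)))"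
        unfolding smulD_def using be[OF j] by (simp add: Abs_df_inverse[OF m[OF j]] max.absorb1)
    qed
    finally show ?thesis .
  qed
  have "T.S.F (\<lambda>i. smulD (\<alpha> i) (Abs_df (\<gamma> (E \<inter> Es i)))) {1..n}
      = T.S.F (\<lambda>i. T.S.F (\<lambda>j. smulD (\<alpha> i) (h i j)) {1..m}) {1..n}"
    by (rule T.S.cong) (simp_all add: row)
  also have "\<dots> = T.S.F (\<lambda>i. T.S.F (\<lambda>j. smulD (\<beta> j) (h i j)) {1..m}) {1..n}"
    by (rule T.S.cong, simp, rule T.S.cong) (simp_all add: key)
  also have "\<dots> = T.S.F (\<lambda>j. T.S.F (\<lambda>i. smulD (\<beta> j) (h i j)) {1..n}) {1..m}"
    by (rule T.S.swap)
  also have "\<dots> = T.S.F (\<lambda>j. smulD (\<beta> j) (Abs_df (\<gamma> (E \<inter> Fs j)))) {1..m}"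
    by (rule T.S.cong) (simp_all add: col)
  finally show ?thesis using L Rr by simp
qed

end
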